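(* Let $(X,d_X)$ and $(Y,d_Y)$ be nonempty finite metric spaces. Then $\overline{d_{\mathrm{GH}}}((X,d_X),(Y,d_Y))=0$ if and only if either there exists $c^*>0$ such that $(X,c^*d_X)$ is isometric to $(Y,d_Y)$, or $(Y,d_Y)$ is a one-point space.
   Context: The Gromov–Hausdorff distance is $d_{\mathrm{GH}}((X,d_X),(Y,d_Y))=\tfrac12\inf_{R}\sup_{(x,y),(x',y')\in R}|d_X(x,x')-d_Y(y,y')|$, the infimum over correspondences $R\subseteq X\times Y$ (relations whose projections onto $X$ and onto $Y$ are surjective). Define $\overline{d_{\mathrm{GH}}}((X,d_X),(Y,d_Y))=\inf_{c>0}d_{\mathrm{GH}}((X,c\,d_X),(Y,d_Y))$. *)

theory Defs
  imports Complex_Main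
begin

definition metric_on :: "'a set \<Rightarrow> ('a \<Rightarrow> 'a \<Rightarrow> real) \<Rightarrow> bool" where
  "metric_on X d \<longleftrightarrow>
     (\<forall>x\<in>X. \<forall>y\<in>X. d x y \<ge> 0) \<and>
     (\<forall>x\<in>X. \<forall>y\<in>X. d x y = 0 \<longleftrightarrow> x = y) \<and>
     (\<forall>x\<in>X. \<forall>y\<in>X. d x y = d y x) \<and>
     (\<forall>x\<in>X. \<forall>y\<in>X. \<forall>z\<in>X. d x z \<le> d x y + d y z)"

definition correspondence :: "'a set \<Rightarrow> 'b set \<Rightarrow> ('a \<times> 'b) set \<Rightarrow> bool" where
  "correspondence X Y R \<longleftrightarrow> R \<subseteq> X \<times> Y \<and> fst ` R = X \<and> snd ` R = Y"

definition distortion ::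
  "('a \<Rightarrow> 'a \<Rightarrow> real) \<Rightarrow> ('b \<Rightarrow> 'b \<Rightarrow> real) \<Rightarrow> ('a \<times> 'b) set \<Rightarrow> real" where
  "distortion dX dY R =
     (SUP p \<in> R \<times> R. \<bar>dX (fst (fst p)) (fst (snd p)) - dY (snd (fst p)) (snd (snd p))\<bar>)"

definition dGH ::
  "'a set \<Rightarrow> ('a \<Rightarrow> 'a \<Rightarrow> real) \<Rightarrow> 'b set \<Rightarrow> ('b \<Rightarrow> 'b \<Rightarrow> real) \<Rightarrow> real" where
  "dGH X dX Y dY = (1/2) * (INF R \<in> {R. correspondence X Y R}. distortion dX dY R)"

definition dGH_bar ::
  "'a set \<Rightarrow> ('a \<Rightarrow> 'a \<Rightarrow> real) \<Rightarrow> 'b set \<Rightarrow> ('b \<Rightarrow> 'b \<Rightarrow> real) \<Rightarrow> real" where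
  "dGH_bar X dX Y dY = (INF c \<in> {c::real. c > 0}. dGH X (\<lambda>x x'. c * dX x x') Y dY)"

definition isometric ::
  "'a set \<Rightarrow> ('a \<Rightarrow> 'a \<Rightarrow> real) \<Rightarrow> 'b set \<Rightarrow> ('b \<Rightarrow> 'b \<Rightarrow> real) \<Rightarrow> bool" where
  "isometric X dX Y dY \<longleftrightarrow>
     (\<exists>f. bij_betw f X Y \<and> (\<forall>x\<in>X. \<forall>x'\<in>X. dY (f x) (f x') = dX x x'))"

end

theory Submission
  imports Defs
begin

lemma corr_finite: "finite X \<Longrightarrow> finite Y \<Longrightarrow> correspondence X Y R \<Longrightarrow> finite R"
  unfolding correspondence_def by (meson finite_SigmaI finite_subset)

lemma corr_ne: "X \<noteq> {} \<Longrightarrow> correspondence X Y R \<Longrightarrow> R \<noteq> {}"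
  unfolding correspondence_def by auto

lemma dist_upper:
  assumes "finite R" "p \<in> R" "q \<in> R"
  shows "\<bar>d1 (fst p) (fst q) - d2 (snd p) (snd q)\<bar> \<le> distortion d1 d2 R"
proof -
  have "finite (R \<times> R)" using assms by auto
  hence b: "bdd_above ((\<lambda>p. \<bar>d1 (fst (fst p)) (fst (snd p)) - d2 (snd (fst p)) (snd (snd p))\<bar>) ` (R \<times> R))"
    by (intro bdd_above_finite) auto
  have "(p,q) \<in> R \<times> R" using assms by auto
  from cSUP_upper[OF this b] show ?thesis unfolding distortion_def by simp
qed

lemma dist_nonneg:
  assumes "finite R" "R \<noteq> {}"
  shows "0 \<le> distortion d1 d2 R"
proof -
  obtain p where "p \<in> R" using assms by auto
  from dist_upper[OF assms(1) this this, of d1 d2] show ?thesis by linarith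
qed

lemma dist_le:
  assumes "R \<noteq> {}" "\<And>p q. p \<in> R \<Longrightarrow> q \<in> R \<Longrightarrow> \<bar>d1 (fst p) (fst q) - d2 (snd p) (snd q)\<bar> \<le> B"
  shows "distortion d1 d2 R \<le> B"
  unfolding distortion_def using assms by (intro cSUP_least) auto

lemma corr_full: "correspondence X Y (X \<times> Y) \<longleftrightarrow> (X = {} \<longleftrightarrow> Y = {})"
  unfolding correspondence_def by auto

lemma dGH_bdd:
  assumes "finite X" "finite Y" "X \<noteq> {}"
  shows "bdd_below ((distortion d1 d2) ` {R. correspondence X Y R})"
  unfolding bdd_below_def
proof (intro exI[of _ 0] ballI)
  fix r assume "r \<in> distortion d1 d2 ` {R. correspondence X Y R}"
  then obtain R where H: "correspondence X Y R" "r = distortion d1 d2 R" by auto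
  thus "0 \<le> r" using dist_nonneg[OF corr_finite[OF assms(1,2) H(1)] corr_ne[OF assms(3) H(1)]] by simp
qed

lemma dGH_le:
  assumes "finite X" "finite Y" "X \<noteq> {}" "correspondence X Y R"
  shows "dGH X d1 Y d2 \<le> distortion d1 d2 R / 2"
proof -
  have "(INF R \<in> {R. correspondence X Y R}. distortion d1 d2 R) \<le> distortion d1 d2 R"
    using assms by (intro cINF_lower dGH_bdd) auto
  thus ?thesis unfolding dGH_def by simp
qed

lemma dGH_nonneg:
  assumes "finite X" "finite Y" "X \<noteq> {}" "Y \<noteq> {}"
  shows "0 \<le> dGH X d1 Y d2"
proof -
  have "0 \<le> (INF R \<in> {R. correspondence X Y R}. distortion d1 d2 R)"
  proof (rule cINF_greatest)
    show "{R. correspondence X Y R} \<noteq> {}" using assms corr_full[of X Y] by auto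
    fix R assume "R \<in> {R. correspondence X Y R}"
    hence H: "correspondence X Y R" by simp
    show "0 \<le> distortion d1 d2 R" using dist_nonneg[OF corr_finite[OF assms(1,2) H] corr_ne[OF assms(3) H]] .
  qed
  thus ?thesis unfolding dGH_def by simp
qed

lemma dGH_bar_le:
  assumes "finite X" "finite Y" "X \<noteq> {}" "Y \<noteq> {}" "c > 0"
  shows "dGH_bar X dX Y dY \<le> dGH X (\<lambda>x x'. c * dX x x') Y dY"
  unfolding dGH_bar_def using assms
  by (intro cINF_lower) (auto simp: bdd_below_def intro!: exI[of _ 0] dGH_nonneg)

lemma dGH_bar_nonneg:
  assumes "finite X" "finite Y" "X \<noteq> {}" "Y \<noteq> {}"
  shows "0 \<le> dGH_bar X dX Y dY"
  unfolding dGH_bar_def using assms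
  by (intro cINF_greatest) (auto intro!: dGH_nonneg gt_ex)

theorem mainTheorem4:
  fixes X :: "'a set" and dX :: "'a \<Rightarrow> 'a \<Rightarrow> real"
    and Y :: "'b set" and dY :: "'b \<Rightarrow> 'b \<Rightarrow> real"
  assumes "finite X" "X \<noteq> {}" "metric_on X dX"
    and "finite Y" "Y \<noteq> {}" "metric_on Y dY"
  shows "dGH_bar X dX Y dY = 0 \<longleftrightarrow>
           ((\<exists>c>0. isometric X (\<lambda>x x'. c * dX x x') Y dY) \<or> (\<exists>y. Y = {y}))"
proof
  let ?S = "{R. correspondence X Y R}"
  let ?D = "\<lambda>c R. distortion (\<lambda>x x'. c * dX x x') dY R"
  have fS: "finite ?S"
  proof -
    have "?S \<subseteq> Pow (X \<times> Y)" unfolding correspondence_def by auto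
    thus ?thesis using assms by (meson finite_Pow_iff finite_SigmaI finite_subset)
  qed
  have Sne: "X \<times> Y \<in> ?S" using assms corr_full[of X Y] by auto
  assume z: "dGH_bar X dX Y dY = 0"
  have eps: "\<exists>c>0. \<exists>R\<in>?S. ?D c R < e" if "e > 0" for e
  proof -
    have "dGH_bar X dX Y dY < e/2" using z that by simp
    moreover have "{c::real. c > 0} \<noteq> {}" by (auto intro: exI[of _ 1])
    moreover have "bdd_below ((\<lambda>c. dGH X (\<lambda>x x'. c * dX x x') Y dY) ` {c::real. c > 0})"
      unfolding bdd_below_def using dGH_nonneg[OF assms(1,4,2,5)] by blast
    ultimately have "\<exists>c\<in>{c::real. c > 0}. dGH X (\<lambda>x x'. c * dX x x') Y dY < e/2"
      unfolding dGH_bar_def by (subst (asm) cINF_less_iff)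
    then obtain c where c: "c > 0" "dGH X (\<lambda>x x'. c * dX x x') Y dY < e/2" by auto
    hence "(INF R \<in> ?S. ?D c R) < e" unfolding dGH_def by simp
    moreover have "?S \<noteq> {}" using Sne by blast
    moreover have "bdd_below (?D c ` ?S)" using dGH_bdd[OF assms(1,4,2)] .
    ultimately have "\<exists>R\<in>?S. ?D c R < e" by (subst (asm) cINF_less_iff)
    then obtain R where "R \<in> ?S" "?D c R < e" by blast
    thus ?thesis using c by blast
  qed
  have "\<exists>R\<in>?S. \<forall>e>0. \<exists>c>0. ?D c R < e"
  proof (rule ccontr)
    assume "\<not> ?thesis"
    hence "\<forall>R\<in>?S. \<exists>e. e > 0 \<and> (\<forall>c>0. ?D c R \<ge> e)" by (metis not_less)
    then obtain f where f: "\<And>R. R \<in> ?S \<Longrightarrow> f R > 0 \<and> (\<forall>c>0. ?D c R \<ge> f R)"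
      by metis
    define e where "e = Min (f ` ?S)"
    have "e > 0" unfolding e_def using fS Sne f by (subst Min_gr_iff) auto
    then obtain c R where cR: "c > 0" "R \<in> ?S" "?D c R < e" using eps by blast
    have "e \<le> f R" unfolding e_def using fS cR(2) by auto
    thus False using f[OF cR(2)] cR by force
  qed
  then obtain R where RS: "R \<in> ?S" and Re: "\<And>e. e > 0 \<Longrightarrow> \<exists>c>0. ?D c R < e" by blast
  have fR: "finite R" using RS assms corr_finite by blast
  have Rsub: "R \<subseteq> X \<times> Y" and fstR: "fst ` R = X" and sndR: "snd ` R = Y"
    using RS unfolding correspondence_def by auto
  have mX: "\<And>x y. x \<in> X \<Longrightarrow> y \<in> X \<Longrightarrow> dX x y \<ge> 0" "\<And>x y. x \<in> X \<Longrightarrow> y \<in> X \<Longrightarrow> dX x y = 0 \<longleftrightarrow> x = y"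
    using assms(3) unfolding metric_on_def by auto
  have mY: "\<And>x y. x \<in> Y \<Longrightarrow> y \<in> Y \<Longrightarrow> dY x y \<ge> 0" "\<And>x y. x \<in> Y \<Longrightarrow> y \<in> Y \<Longrightarrow> dY x y = 0 \<longleftrightarrow> x = y"
    using assms(6) unfolding metric_on_def by auto
  show "(\<exists>c>0. isometric X (\<lambda>x x'. c * dX x x') Y dY) \<or> (\<exists>y. Y = {y})"
  proof (cases "\<exists>y. Y = {y}")
    case True thus ?thesis by blast
  next
    case False
    obtain y1 where y1: "y1 \<in> Y" using assms(5) by blast
    moreover have "Y \<noteq> {y1}" using False by blast
    then obtain y2 where "y2 \<in> Y" "y2 \<noteq> y1" using y1 by blast
    ultimately have y: "y1 \<in> Y" "y2 \<in> Y" "y1 \<noteq> y2" by auto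
    obtain p1 where p1: "p1 \<in> R" "snd p1 = y1" using sndR y(1) by force
    obtain p2 where p2: "p2 \<in> R" "snd p2 = y2" using sndR y(2) by force
    define a where "a = dX (fst p1) (fst p2)"
    define b where "b = dY y1 y2"
    have Xp: "\<And>p. p \<in> R \<Longrightarrow> fst p \<in> X" "\<And>p. p \<in> R \<Longrightarrow> snd p \<in> Y" using Rsub by auto
    have bpos: "b > 0" unfolding b_def using mY(1)[OF y(1,2)] mY(2)[OF y(1,2)] y(3) by linarith
    have apos0: "a \<ge> 0" unfolding a_def using mX Xp p1 p2 by auto
    have pair: "\<bar>c * dX (fst p) (fst q) - dY (snd p) (snd q)\<bar> < e"
      if "p \<in> R" "q \<in> R" "?D c R < e" for p q c e
      using dist_upper[OF fR that(1,2), of "\<lambda>x x'. c * dX x x'" dY] that(3) by simp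
    have apos: "a > 0"
    proof (rule ccontr)
      assume "\<not> a > 0" hence a0: "a = 0" using apos0 by simp
      obtain c where "c > 0" "?D c R < b" using Re bpos by blast
      from pair[OF p1(1) p2(1) this(2)] a0 p1 p2 show False unfolding a_def b_def by simp
    qed
    define c0 where "c0 = b / a"
    have c0pos: "c0 > 0" unfolding c0_def using apos bpos by simp
    have exact: "c0 * dX (fst p) (fst q) = dY (snd p) (snd q)" if pq: "p \<in> R" "q \<in> R" for p q
    proof (rule ccontr)
      define a' where "a' = dX (fst p) (fst q)"
      define b' where "b' = dY (snd p) (snd q)"
      have a'0: "a' \<ge> 0" unfolding a'_def using mX Xp pq by auto
      assume "c0 * dX (fst p) (fst q) \<noteq> dY (snd p) (snd q)"
      hence dpos: "\<bar>c0 * a' - b'\<bar> > 0" unfolding a'_def b'_def by simp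
      define \<delta> where "\<delta> = \<bar>c0 * a' - b'\<bar>"
      define e where "e = \<delta> / (a'/a + 1)"
      have den: "a'/a + 1 > 0" using a'0 apos by (simp add: add_nonneg_pos)
      have epos: "e > 0" unfolding e_def \<delta>_def using dpos den by simp
      obtain c where c: "c > 0" "?D c R < e" using Re epos by blast
      have h1: "\<bar>c * a - b\<bar> < e" using pair[OF p1(1) p2(1) c(2)] p1 p2 unfolding a_def b_def by simp
      have h2: "\<bar>c * a' - b'\<bar> < e" using pair[OF pq c(2)] unfolding a'_def b'_def by simp
      have "c0 - c = (b - c * a) / a" unfolding c0_def using apos by (simp add: field_simps)
      hence h3: "\<bar>c0 - c\<bar> = \<bar>c * a - b\<bar> / a" using apos by (simp add: abs_minus_commute)
      have "\<bar>c * a - b\<bar> / a \<le> e / a" using h1 apos by (intro divide_right_mono) auto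
      hence h4: "\<bar>c0 - c\<bar> * a' \<le> e / a * a'"
        using h3 a'0 by (intro mult_right_mono) simp_all
      have "\<delta> \<le> \<bar>c0 - c\<bar> * a' + \<bar>c * a' - b'\<bar>"
      proof -
        have "c0 * a' - b' = (c0 - c) * a' + (c * a' - b')" by (simp add: algebra_simps)
        hence "\<delta> \<le> \<bar>(c0 - c) * a'\<bar> + \<bar>c * a' - b'\<bar>" unfolding \<delta>_def by (metis abs_triangle_ineq)
        thus ?thesis using a'0 by (simp add: abs_mult)
      qed
      also have "\<dots> < e / a * a' + e" using h4 h2 by linarith
      also have "\<dots> = e * (a'/a + 1)" by (simp add: algebra_simps)
      also have "\<dots> = \<delta>" unfolding e_def using den by simp
      finally show False by simp
    qed
    define f where "f x = (SOME y. (x, y) \<in> R)" for x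
    have fx: "(x, f x) \<in> R" if "x \<in> X" for x
    proof -
      obtain p where "p \<in> R" "fst p = x" using fstR \<open>x \<in> X\<close> by force
      hence "(x, snd p) \<in> R" by auto
      thus ?thesis unfolding f_def by (rule someI)
    qed
    have funR: "y = f x" if "(x, y) \<in> R" for x y
    proof -
      have x: "x \<in> X" using that Rsub by auto
      have "dY y (f x) = c0 * dX x x" using exact[OF that fx[OF x]] by simp
      also have "\<dots> = 0" using mX x by simp
      finally have "dY y (f x) = 0" .
      moreover have "y \<in> Y" "f x \<in> Y" using that fx[OF x] Rsub by auto
      ultimately show ?thesis using mY(2) by blast
    qed
    have iso: "dY (f x) (f x') = c0 * dX x x'" if "x \<in> X" "x' \<in> X" for x x'
      using exact[OF fx[OF that(1)] fx[OF that(2)]] by simp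
    have "bij_betw f X Y"
    proof (rule bij_betwI')
      fix x x' assume xx: "x \<in> X" "x' \<in> X"
      show "(f x = f x') = (x = x')"
      proof
        assume eq: "f x = f x'"
        have "f x \<in> Y" using fx[OF xx(1)] Rsub by auto
        hence "dY (f x) (f x') = 0" using mY(2) eq by simp
        hence "c0 * dX x x' = 0" using iso[OF xx] by simp
        thus "x = x'" using c0pos mX xx by simp
      qed simp
    next
      fix x assume "x \<in> X" thus "f x \<in> Y" using fx Rsub by auto
    next
      fix y assume "y \<in> Y"
      then obtain p where "p \<in> R" "snd p = y" using sndR by force
      hence "(fst p, y) \<in> R" by auto
      thus "\<exists>x\<in>X. y = f x" using funR Rsub by auto
    qed
    hence "isometric X (\<lambda>x x'. c0 * dX x x') Y dY"
      unfolding isometric_def using iso by blast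
    thus ?thesis using c0pos by blast
  qed
next
  assume H: "(\<exists>c>0. isometric X (\<lambda>x x'. c * dX x x') Y dY) \<or> (\<exists>y. Y = {y})"
  have nn: "0 \<le> dGH_bar X dX Y dY" using assms dGH_bar_nonneg by blast
  show "dGH_bar X dX Y dY = 0"
  proof (cases "\<exists>c>0. isometric X (\<lambda>x x'. c * dX x x') Y dY")
    case True
    then obtain c f where c: "c > 0" and bij: "bij_betw f X Y"
      and iso: "\<And>x x'. x \<in> X \<Longrightarrow> x' \<in> X \<Longrightarrow> dY (f x) (f x') = c * dX x x'"
      unfolding isometric_def by blast
    define R where "R = (\<lambda>x. (x, f x)) ` X"
    have fXY: "f ` X = Y" using bij by (simp add: bij_betw_def)
    have "fst ` R = X" unfolding R_def by (simp add: image_image)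
    moreover have "snd ` R = Y" unfolding R_def using fXY by (simp add: image_image)
    moreover have "R \<subseteq> X \<times> Y" unfolding R_def using fXY by blast
    ultimately have corr: "correspondence X Y R" unfolding correspondence_def by blast
    have "distortion (\<lambda>x x'. c * dX x x') dY R \<le> 0"
    proof (rule dist_le)
      show "R \<noteq> {}" using assms(2) unfolding R_def by blast
      fix p q assume "p \<in> R" "q \<in> R"
      then obtain x x' where "x \<in> X" "x' \<in> X" "p = (x, f x)" "q = (x', f x')" unfolding R_def by blast
      thus "\<bar>c * dX (fst p) (fst q) - dY (snd p) (snd q)\<bar> \<le> 0" using iso by simp
    qed
    hence "dGH X (\<lambda>x x'. c * dX x x') Y dY \<le> 0"
      using dGH_le[OF assms(1,4,2) corr, of "\<lambda>x x'. c * dX x x'" dY] by simp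
    thus ?thesis using dGH_bar_le[OF assms(1,4,2,5) c, of dX dY] nn by simp
  next
    case False
    then obtain y where Y: "Y = {y}" using H by blast
    define M where "M = Max ((\<lambda>p. dX (fst p) (snd p)) ` (X \<times> X))"
    have M: "dX x x' \<le> M" if "x \<in> X" "x' \<in> X" for x x'
      unfolding M_def using assms(1) that by (intro Max_ge) (auto intro!: image_eqI[where x="(x,x')"])
    obtain x0 where x0: "x0 \<in> X" using assms(2) by blast
    have "dX x0 x0 = 0" using assms(3) x0 unfolding metric_on_def by blast
    hence M0: "M \<ge> 0" using M[OF x0 x0] by simp
    have corr: "correspondence X Y (X \<times> Y)" using corr_full assms by blast
    have le: "dGH_bar X dX Y dY \<le> c * M / 2" if c: "c > 0" for c
    proof -
      have "distortion (\<lambda>x x'. c * dX x x') dY (X \<times> Y) \<le> c * M"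
      proof (rule dist_le)
        show "X \<times> Y \<noteq> {}" using assms by auto
        fix p q assume pq: "p \<in> X \<times> Y" "q \<in> X \<times> Y"
        have "snd p = y" "snd q = y" using pq Y by auto
        moreover have "dY y y = 0" using assms(6) Y unfolding metric_on_def by blast
        ultimately have dY0: "dY (snd p) (snd q) = 0" by simp
        have "fst p \<in> X" "fst q \<in> X" using pq by auto
        moreover have "\<forall>x\<in>X. \<forall>y\<in>X. dX x y \<ge> 0" using assms(3) unfolding metric_on_def by blast
        ultimately have "0 \<le> dX (fst p) (fst q)" "dX (fst p) (fst q) \<le> M"
          using M by auto
        with dY0 show "\<bar>c * dX (fst p) (fst q) - dY (snd p) (snd q)\<bar> \<le> c * M"
          using c by (simp add: abs_mult mult_left_mono)
      qed
      moreover note dGH_le[OF assms(1,4,2) corr, of "\<lambda>x x'. c * dX x x'" dY]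
      moreover note dGH_bar_le[OF assms(1,4,2,5) c, of dX dY]
      ultimately show ?thesis by linarith
    qed
    have "dGH_bar X dX Y dY \<le> 0"
    proof (rule ccontr)
      assume "\<not> ?thesis"
      hence g: "dGH_bar X dX Y dY > 0" by simp
      define c where "c = dGH_bar X dX Y dY / (M + 1)"
      have c: "c > 0" unfolding c_def using g M0 by simp
      have "c * M / 2 < dGH_bar X dX Y dY"
      proof -
        have "c * M \<le> c * (M + 1)" using c by simp
        also have "\<dots> = dGH_bar X dX Y dY" unfolding c_def using M0 by simp
        finally show ?thesis using g by simp
      qed
      thus False using le[OF c] by simp
    qed
    thus ?thesis using nn by simp
  qed
qed

end
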